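(* A graph $G$ admits a straight-line drawing with spanning ratio equal to $1$ if and only if $G$ contains a Hamiltonian path.
   Context: A drawing of a graph maps each vertex to a distinct point of the plane and each edge to a Jordan arc between its end-vertices; it is straight-line if every edge is drawn as the straight-line segment between its end-vertices (edges may pass through other vertices). In a straight-line drawing $\Gamma$, the length of a path is the sum of the Euclidean lengths of its edges, $\pi_\Gamma(u,v)$ is the minimum length of a path between $u$ and $v$, and $\|uv\|_\Gamma$ is the Euclidean distance between the points representing $u$ and $v$. The spanning ratio of $\Gamma$ is $\max_{u\neq v} \pi_\Gamma(u,v)/\|uv\|_\Gamma$ over all pairs of distinct vertices. *)

theory Defs
  imports "HOL-Analysis.Analysis"
begin

definition graph :: "'a set \<Rightarrow> 'a set set \<Rightarrow> bool" where
  "graph V E \<longleftrightarrow> finite V \<and> (\<forall>e\<in>E. \<exists>u v. u \<in> V \<and> v \<in> V \<and> u \<noteq> v \<and> e = {u, v})"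

definition is_path :: "'a set \<Rightarrow> 'a set set \<Rightarrow> 'a list \<Rightarrow> bool" where
  "is_path V E ps \<longleftrightarrow> ps \<noteq> [] \<and> distinct ps \<and> set ps \<subseteq> V \<and>
     (\<forall>i. Suc i < length ps \<longrightarrow> {ps ! i, ps ! Suc i} \<in> E)"

definition hamiltonian_path :: "'a set \<Rightarrow> 'a set set \<Rightarrow> 'a list \<Rightarrow> bool" where
  "hamiltonian_path V E ps \<longleftrightarrow> is_path V E ps \<and> set ps = V"

text \<open>A straight-line drawing: vertices mapped to distinct points of the plane;
  each edge is drawn as the segment between its end-points (so the drawing is
  determined by the vertex positions).\<close>
definition straight_line_drawing :: "'a set \<Rightarrow> ('a \<Rightarrow> real^2) \<Rightarrow> bool" where
  "straight_line_drawing V \<Gamma> \<longleftrightarrow> inj_on \<Gamma> V"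

definition path_len :: "('a \<Rightarrow> real^2) \<Rightarrow> 'a list \<Rightarrow> real" where
  "path_len \<Gamma> ps = (\<Sum>i<length ps - 1. dist (\<Gamma> (ps ! i)) (\<Gamma> (ps ! Suc i)))"

text \<open>Minimum length of a path between u and v (\<infinity> if there is none).\<close>
definition pi_dist :: "'a set \<Rightarrow> 'a set set \<Rightarrow> ('a \<Rightarrow> real^2) \<Rightarrow> 'a \<Rightarrow> 'a \<Rightarrow> ereal" where
  "pi_dist V E \<Gamma> u v = (INF ps \<in> {ps. is_path V E ps \<and> hd ps = u \<and> last ps = v}. ereal (path_len \<Gamma> ps))"

definition spanning_ratio :: "'a set \<Rightarrow> 'a set set \<Rightarrow> ('a \<Rightarrow> real^2) \<Rightarrow> ereal" where
  "spanning_ratio V E \<Gamma> = (SUP (u, v) \<in> {(u, v). u \<in> V \<and> v \<in> V \<and> u \<noteq> v}.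
       pi_dist V E \<Gamma> u v / ereal (dist (\<Gamma> u) (\<Gamma> v)))"

end

theory Submission
  imports Defs
begin

lemma path_len_Nil[simp]: "path_len \<Gamma> [] = 0" and path_len_single[simp]: "path_len \<Gamma> [a] = 0"
  by (auto simp: path_len_def)

lemma path_len_Cons2[simp]: "path_len \<Gamma> (a # b # rest) = dist (\<Gamma> a) (\<Gamma> b) + path_len \<Gamma> (b # rest)"
proof -
  have "length (a#b#rest) - 1 = Suc (length (b#rest) - 1)" by simp
  then show ?thesis unfolding path_len_def
    by (simp only: sum.lessThan_Suc_shift) simp
qed

lemma path_len_ge_dist: "ps \<noteq> [] \<Longrightarrow> dist (\<Gamma> (hd ps)) (\<Gamma> (last ps)) \<le> path_len \<Gamma> ps"
proof (induction ps rule: induct_list012)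
  case (3 a b rest)
  then show ?case using dist_triangle[of "\<Gamma> a" "\<Gamma> (last (b#rest))" "\<Gamma> b"] by simp
qed auto

lemma path_len_mid: "z \<in> set ps \<Longrightarrow> dist (\<Gamma> (hd ps)) (\<Gamma> z) + dist (\<Gamma> z) (\<Gamma> (last ps)) \<le> path_len \<Gamma> ps"
proof (induction ps rule: induct_list012)
  case (2 a) then show ?case by simp
next
  case (3 a b rest)
  show ?case
  proof (cases "z = a")
    case True
    then show ?thesis using path_len_ge_dist[of "a#b#rest" \<Gamma>] by simp
  next
    case False
    then have "z \<in> set (b#rest)" using 3 by simp
    then have "dist (\<Gamma> b) (\<Gamma> z) + dist (\<Gamma> z) (\<Gamma> (last (b#rest))) \<le> path_len \<Gamma> (b#rest)"
      using 3 by simp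
    then show ?thesis using dist_triangle[of "\<Gamma> a" "\<Gamma> z" "\<Gamma> b"] by simp
  qed
qed auto

lemma path_len_rev: "path_len \<Gamma> (rev ps) = path_len \<Gamma> ps"
proof -
  let ?n = "length ps"
  have "path_len \<Gamma> (rev ps) = (\<Sum>i<?n - 1. dist (\<Gamma> (ps ! (?n - 1 - i))) (\<Gamma> (ps ! (?n - 1 - Suc i))))"
    unfolding path_len_def by (intro sum.cong) (auto simp: rev_nth)
  also have "\<dots> = (\<Sum>i<?n - 1. dist (\<Gamma> (ps ! i)) (\<Gamma> (ps ! Suc i)))"
  proof (rule sum.reindex_bij_witness[where i="\<lambda>k. ?n - 2 - k" and j="\<lambda>k. ?n - 2 - k"])
    fix a assume a: "a \<in> {..<?n - 1}"
    show "?n - 2 - (?n - 2 - a) = a" using a by auto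
    show "?n - 2 - a \<in> {..<?n - 1}" using a by auto
    have e1: "Suc (?n - 2 - a) = ?n - 1 - a" and e2: "?n - 1 - Suc a = ?n - 2 - a" using a by auto
    show "dist (\<Gamma> (ps ! (?n - 2 - a))) (\<Gamma> (ps ! Suc (?n - 2 - a)))
       = dist (\<Gamma> (ps ! (?n - 1 - a))) (\<Gamma> (ps ! (?n - 1 - Suc a)))" unfolding e1 e2 by (simp add: dist_commute)
  qed auto
  finally show ?thesis unfolding path_len_def .
qed

lemma is_path_rev: "is_path V E ps \<Longrightarrow> is_path V E (rev ps)"
  unfolding is_path_def
proof (safe)
  fix i assume h: "\<forall>i. Suc i < length ps \<longrightarrow> {ps ! i, ps ! Suc i} \<in> E" "Suc i < length (rev ps)"
  let ?k = "length ps - 2 - i"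
  have "{ps ! ?k, ps ! Suc ?k} \<in> E" using h by auto
  moreover have "rev ps ! i = ps ! Suc ?k" "rev ps ! Suc i = ps ! ?k" using h(2)
    by (auto simp: rev_nth Suc_diff_Suc numeral_2_eq_2)
  ultimately show "{rev ps ! i, rev ps ! Suc i} \<in> E" by (simp add: insert_commute)
qed auto

lemma sub_path:
  assumes "is_path V E ps" "i \<le> j" "j < length ps"
  defines "qs \<equiv> take (Suc (j - i)) (drop i ps)"
  shows "is_path V E qs" "hd qs = ps ! i" "last qs = ps ! j"
    "path_len \<Gamma> qs = (\<Sum>k<j - i. dist (\<Gamma> (ps ! (i + k))) (\<Gamma> (ps ! Suc (i + k))))"
proof -
  have len: "length qs = Suc (j - i)" using assms by (simp add: qs_def)
  have nth: "k < Suc (j - i) \<Longrightarrow> qs ! k = ps ! (i + k)" for k using assms by (simp add: qs_def)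
  show "is_path V E qs" using assms(1) unfolding is_path_def
  proof (intro conjI allI impI)
    show "qs \<noteq> []" using len by auto
    show "distinct qs" using assms(1) by (simp add: qs_def is_path_def)
    show "set qs \<subseteq> V" using assms(1) unfolding qs_def is_path_def
      by (meson order_trans set_drop_subset set_take_subset)
    fix k assume "Suc k < length qs"
    then have k: "Suc k < Suc (j - i)" using len by simp
    then have e: "qs ! k = ps ! (i + k)" "qs ! Suc k = ps ! Suc (i + k)" using nth[of k] nth[of "Suc k"] by auto
    have "Suc (i + k) < length ps" using k assms(2,3) by linarith
    then show "{qs ! k, qs ! Suc k} \<in> E" using assms(1) unfolding e is_path_def by blast
  qed
  show "hd qs = ps ! i" using nth[of 0] len by (cases qs) auto
  show "last qs = ps ! j" using nth[of "j - i"] len assms by (simp add: last_conv_nth)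
  show "path_len \<Gamma> qs = (\<Sum>k<j - i. dist (\<Gamma> (ps ! (i + k))) (\<Gamma> (ps ! Suc (i + k))))"
    unfolding path_len_def len by (intro sum.cong) (auto simp: nth)
qed

definition idx :: "'a list \<Rightarrow> 'a \<Rightarrow> nat" where
  "idx ps x = (THE i. i < length ps \<and> ps ! i = x)"

lemma idx_nth: "distinct ps \<Longrightarrow> i < length ps \<Longrightarrow> idx ps (ps ! i) = i"
  unfolding idx_def by (rule the_equality) (auto simp: nth_eq_iff_index_eq)

lemma idx_in: "distinct ps \<Longrightarrow> x \<in> set ps \<Longrightarrow> idx ps x < length ps \<and> ps ! idx ps x = x"
  by (metis idx_nth in_set_conv_nth)

lemma dist_line: "dist (a *\<^sub>R (axis 1 1 :: real^2)) (b *\<^sub>R axis 1 1) = \<bar>a - b\<bar>"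
  by (simp add: dist_norm scaleR_diff_left[symmetric])

lemma ham_drawing:
  assumes hp: "hamiltonian_path V E ps" and c2: "card V \<ge> 2"
  shows "\<exists>\<Gamma>. straight_line_drawing V \<Gamma> \<and> spanning_ratio V E \<Gamma> = 1"
proof -
  define \<Gamma> where "\<Gamma> = (\<lambda>x. real (idx ps x) *\<^sub>R (axis 1 1 :: real^2))"
  have P: "is_path V E ps" and S: "set ps = V" using hp by (auto simp: hamiltonian_path_def)
  have D: "distinct ps" using P by (simp add: is_path_def)
  have dG: "dist (\<Gamma> u) (\<Gamma> v) = \<bar>real (idx ps u) - real (idx ps v)\<bar>" for u v
    by (simp add: \<Gamma>_def dist_line)
  have inj: "inj_on \<Gamma> V"
  proof (rule inj_onI)
    fix u v assume "u \<in> V" "v \<in> V" "\<Gamma> u = \<Gamma> v"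
    then have "idx ps u = idx ps v" using dG[of u v] by simp
    then show "u = v" using \<open>u \<in> V\<close> \<open>v \<in> V\<close> S D by (metis idx_in)
  qed
  have sub: "\<exists>qs. is_path V E qs \<and> hd qs = ps ! i \<and> last qs = ps ! j \<and> path_len \<Gamma> qs = real (j - i)"
    if "i \<le> j" "j < length ps" for i j
  proof -
    have "(\<Sum>k<j - i. dist (\<Gamma> (ps ! (i + k))) (\<Gamma> (ps ! Suc (i + k)))) = (\<Sum>k<j - i. 1)"
    proof (intro sum.cong refl)
      fix k assume "k \<in> {..<j - i}"
      then have "i + k < length ps" "Suc (i + k) < length ps" using that by auto
      then show "dist (\<Gamma> (ps ! (i + k))) (\<Gamma> (ps ! Suc (i + k))) = 1"
        using D by (simp add: dG idx_nth)
    qed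
    then show ?thesis using sub_path(1-3)[OF P that] sub_path(4)[OF P that, where \<Gamma>=\<Gamma>] by auto
  qed
  have pd: "pi_dist V E \<Gamma> u v = ereal (dist (\<Gamma> u) (\<Gamma> v))" if "u \<in> V" "v \<in> V" for u v
  proof -
    let ?i = "idx ps u" and ?j = "idx ps v"
    have ij: "?i < length ps" "?j < length ps" "ps ! ?i = u" "ps ! ?j = v" using that S D idx_in[of ps u] idx_in[of ps v] by auto
    have "\<exists>qs. is_path V E qs \<and> hd qs = u \<and> last qs = v \<and> path_len \<Gamma> qs = dist (\<Gamma> u) (\<Gamma> v)"
    proof (cases "?i \<le> ?j")
      case True
      then show ?thesis using sub[OF True ij(2)] ij by (auto simp: dG)
    next
      case False
      then obtain qs where q: "is_path V E qs" "hd qs = v" "last qs = u" "path_len \<Gamma> qs = real (?i - ?j)"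
        using sub[of ?j ?i] ij by auto
      have "qs \<noteq> []" using q(1) by (simp add: is_path_def)
      then show ?thesis using q False
        by (intro exI[of _ "rev qs"]) (auto simp: is_path_rev path_len_rev hd_rev last_rev dG)
    qed
    then obtain qs where q: "is_path V E qs" "hd qs = u" "last qs = v" "path_len \<Gamma> qs = dist (\<Gamma> u) (\<Gamma> v)"
      by blast
    show ?thesis unfolding pi_dist_def
    proof (rule antisym)
      show "(INF ps\<in>{ps. is_path V E ps \<and> hd ps = u \<and> last ps = v}. ereal (path_len \<Gamma> ps)) \<le> ereal (dist (\<Gamma> u) (\<Gamma> v))"
        using q by (intro INF_lower2[of qs]) auto
      show "ereal (dist (\<Gamma> u) (\<Gamma> v)) \<le> (INF ps\<in>{ps. is_path V E ps \<and> hd ps = u \<and> last ps = v}. ereal (path_len \<Gamma> ps))"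
        by (intro INF_greatest) (auto simp: is_path_def intro: path_len_ge_dist)
    qed
  qed
  have ne: "{(u, v). u \<in> V \<and> v \<in> V \<and> u \<noteq> v} \<noteq> {}"
  proof -
    obtain u v where "u \<in> V" "v \<in> V" "u \<noteq> v" using c2
      by (metis card_2_iff' card_le_Suc_iff numeral_2_eq_2 insertCI)
    then show ?thesis by auto
  qed
  have "spanning_ratio V E \<Gamma> = (SUP (u, v) \<in> {(u, v). u \<in> V \<and> v \<in> V \<and> u \<noteq> v}. 1)"
    unfolding spanning_ratio_def
  proof (intro SUP_cong refl)
    fix x assume "x \<in> {(u, v). u \<in> V \<and> v \<in> V \<and> u \<noteq> v}"
    then obtain u v where x: "x = (u, v)" "u \<in> V" "v \<in> V" "u \<noteq> v" by auto
    have "dist (\<Gamma> u) (\<Gamma> v) > 0" using inj x by (auto simp: inj_on_def)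
    then show "(case x of (u, v) \<Rightarrow> pi_dist V E \<Gamma> u v / ereal (dist (\<Gamma> u) (\<Gamma> v))) = (case x of (u, v) \<Rightarrow> 1)"
      using x pd by simp
  qed
  also have "\<dots> = 1" using ne by simp
  finally show ?thesis using inj by (auto simp: straight_line_drawing_def)
qed

lemma straight_paths:
  assumes fin: "finite V" and inj: "inj_on \<Gamma> V" and sr: "spanning_ratio V E \<Gamma> = 1"
    and uv: "u \<in> V" "v \<in> V" "u \<noteq> v"
  shows "\<exists>qs. is_path V E qs \<and> hd qs = u \<and> last qs = v \<and> path_len \<Gamma> qs \<le> dist (\<Gamma> u) (\<Gamma> v)"
proof -
  let ?d = "dist (\<Gamma> u) (\<Gamma> v)"
  let ?S = "{ps. is_path V E ps \<and> hd ps = u \<and> last ps = v}"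
  have dpos: "?d > 0" using inj uv by (auto simp: inj_on_def)
  have "pi_dist V E \<Gamma> u v / ereal ?d \<le> spanning_ratio V E \<Gamma>"
    unfolding spanning_ratio_def using uv by (intro SUP_upper2[of "(u,v)"]) auto
  then have le1: "pi_dist V E \<Gamma> u v / ereal ?d \<le> 1" using sr by simp
  have pile: "pi_dist V E \<Gamma> u v \<le> ereal ?d"
  proof (cases "pi_dist V E \<Gamma> u v" rule: ereal_cases)
    case (real r)
    then have "r / ?d \<le> 1" using le1 dpos by simp
    then show ?thesis using real dpos by (simp add: divide_le_eq)
  next
    case PInf
    then show ?thesis using le1 dpos by simp
  qed simp
  have finS: "finite ?S"
  proof (rule finite_subset[OF _ finite_lists_length_le[OF fin, of "card V"]])
    show "?S \<subseteq> {xs. set xs \<subseteq> V \<and> length xs \<le> card V}"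
    proof safe
      fix xs assume "is_path V E xs"
      then have "distinct xs" "set xs \<subseteq> V" by (auto simp: is_path_def)
      then show "length xs \<le> card V" using card_mono[OF fin] distinct_card by metis
    qed (auto simp: is_path_def)
  qed
  have neS: "?S \<noteq> {}"
  proof
    assume "?S = {}"
    then have "pi_dist V E \<Gamma> u v = \<infinity>" unfolding pi_dist_def by (simp only: INF_empty top_ereal_def)
    then show False using pile by simp
  qed
  have "Min (path_len \<Gamma> ` ?S) \<in> path_len \<Gamma> ` ?S" using finS neS by (intro Min_in) auto
  then obtain qs where qs: "qs \<in> ?S" "path_len \<Gamma> qs = Min (path_len \<Gamma> ` ?S)" by auto
  have "pi_dist V E \<Gamma> u v = ereal (path_len \<Gamma> qs)" unfolding pi_dist_def
  proof (rule antisym)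
    show "(INF ps\<in>?S. ereal (path_len \<Gamma> ps)) \<le> ereal (path_len \<Gamma> qs)" using qs by (intro INF_lower) 
    show "ereal (path_len \<Gamma> qs) \<le> (INF ps\<in>?S. ereal (path_len \<Gamma> ps))"
      using qs finS by (intro INF_greatest) auto
  qed
  then show ?thesis using qs pile by auto
qed

lemma generic_dir:
  assumes fin: "finite V" and inj: "inj_on (\<Gamma> :: 'a \<Rightarrow> real^2) V"
  shows "\<exists>c. inj_on (\<lambda>x. \<Gamma> x $ 1 + c * \<Gamma> x $ 2) V"
proof -
  let ?B = "(\<lambda>(x, y). (\<Gamma> x $ 1 - \<Gamma> y $ 1) / (\<Gamma> y $ 2 - \<Gamma> x $ 2)) ` (V \<times> V)"
  have "finite ?B" using fin by auto
  then obtain c where c: "c \<notin> ?B" using ex_new_if_finite[OF infinite_UNIV_char_0] by blast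
  show ?thesis
  proof (intro exI inj_onI)
    fix x y assume xy: "x \<in> V" "y \<in> V" "\<Gamma> x $ 1 + c * \<Gamma> x $ 2 = \<Gamma> y $ 1 + c * \<Gamma> y $ 2"
    show "x = y"
    proof (cases "\<Gamma> y $ 2 = \<Gamma> x $ 2")
      case True
      then have "\<Gamma> y $ 1 = \<Gamma> x $ 1" using xy by simp
      then have "\<Gamma> x = \<Gamma> y" using True by (simp add: vec_eq_iff forall_2)
      then show ?thesis using inj xy by (auto simp: inj_on_def)
    next
      case False
      then have "c = (\<Gamma> x $ 1 - \<Gamma> y $ 1) / (\<Gamma> y $ 2 - \<Gamma> x $ 2)" using xy
        by (simp add: field_simps)
      then have "c \<in> ?B" using xy by auto
      then show ?thesis using c by blast
    qed
  qed
qed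

lemma drawing_ham:
  assumes fin: "finite V" and inj: "inj_on (\<Gamma> :: 'a \<Rightarrow> real^2) V" and sr: "spanning_ratio V E \<Gamma> = 1"
    and ne: "V \<noteq> {}"
  shows "\<exists>ps. hamiltonian_path V E ps"
proof -
  obtain c where injg: "inj_on (\<lambda>x. \<Gamma> x $ 1 + c * \<Gamma> x $ 2) V" using generic_dir[OF fin inj] by blast
  define g where "g = (\<lambda>x. \<Gamma> x $ 1 + c * \<Gamma> x $ 2)"
  have injg: "inj_on g V" using injg by (simp add: g_def)
  define L where "L = sorted_list_of_set (g ` V)"
  define ps where "ps = map (inv_into V g) L"
  have setL: "set L = g ` V" using fin by (simp add: L_def)
  have sL: "sorted_wrt (<) L" by (simp add: L_def strict_sorted_list_of_set)
  have dL: "distinct L" by (simp add: L_def)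
  have lenps: "length ps = length L" by (simp add: ps_def)
  have gps: "i < length ps \<Longrightarrow> g (ps ! i) = L ! i" for i
    using setL nth_mem[of i L] by (auto simp: ps_def intro!: f_inv_into_f)
  have psV: "i < length ps \<Longrightarrow> ps ! i \<in> V" for i
    using setL nth_mem[of i L] by (auto simp: ps_def intro!: inv_into_into)
  have setps: "set ps = V" using setL injg by (simp add: ps_def inv_into_image_cancel)
  have dps: "distinct ps" unfolding ps_def using dL setL
    by (simp add: distinct_map inj_on_inv_into)
  have edge: "{ps ! i, ps ! Suc i} \<in> E" if i: "Suc i < length ps" for i
  proof -
    let ?a = "ps ! i" and ?b = "ps ! Suc i"
    have ab: "?a \<in> V" "?b \<in> V" "?a \<noteq> ?b" using i psV dps by (auto simp: nth_eq_iff_index_eq)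
    have Lab: "L ! i < L ! Suc i" using sL i lenps by (simp add: sorted_wrt_nth_less)
    obtain qs where q: "is_path V E qs" "hd qs = ?a" "last qs = ?b" "path_len \<Gamma> qs \<le> dist (\<Gamma> ?a) (\<Gamma> ?b)"
      using straight_paths[OF fin inj sr ab] by blast
    show ?thesis
    proof (cases qs rule: remdups_adj.cases)
      case 1 then show ?thesis using q by (simp add: is_path_def)
    next
      case (2 x) then show ?thesis using q ab by simp
    next
      case (3 x y rest)
      show ?thesis
      proof (cases rest)
        case Nil
        then show ?thesis using q 3 by (force simp: is_path_def)
      next
        case (Cons z r)
        have dq: "distinct qs" "set qs \<subseteq> V" using q by (auto simp: is_path_def)
        have lz: "last qs = last (z # r)" using 3 Cons by simp
        have "last (z # r) \<in> set (z # r)" by (rule last_in_set) simp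
        moreover have "y \<notin> set (z # r)" using dq 3 Cons by simp
        ultimately have yb: "y \<noteq> ?b" using lz q(3) by metis
        have yV: "y \<in> V" and ya: "y \<noteq> ?a" using dq q 3 by auto
        have "y \<in> set qs" using 3 by simp
        then have "dist (\<Gamma> ?a) (\<Gamma> y) + dist (\<Gamma> y) (\<Gamma> ?b) \<le> dist (\<Gamma> ?a) (\<Gamma> ?b)"
          using path_len_mid[of y qs \<Gamma>] q by simp
        then have "dist (\<Gamma> ?a) (\<Gamma> ?b) = dist (\<Gamma> ?a) (\<Gamma> y) + dist (\<Gamma> y) (\<Gamma> ?b)"
          using dist_triangle[of "\<Gamma> ?a" "\<Gamma> ?b" "\<Gamma> y"] by linarith
        then have "\<Gamma> y \<in> closed_segment (\<Gamma> ?a) (\<Gamma> ?b)"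
          using between[of "\<Gamma> ?a" "\<Gamma> ?b" "\<Gamma> y"] by (simp add: between_mem_segment)
        then obtain t where t: "0 \<le> t" "t \<le> 1" "\<Gamma> y = (1 - t) *\<^sub>R \<Gamma> ?a + t *\<^sub>R \<Gamma> ?b"
          by (auto simp: in_segment)
        have c1: "\<Gamma> y $ 1 = (1 - t) * \<Gamma> ?a $ 1 + t * \<Gamma> ?b $ 1"
          and c2: "\<Gamma> y $ 2 = (1 - t) * \<Gamma> ?a $ 2 + t * \<Gamma> ?b $ 2" using t(3) by simp_all
        have gy: "g y = (1 - t) * g ?a + t * g ?b" unfolding g_def c1 c2
          by (simp add: algebra_simps)
        have "g y \<noteq> g ?a" "g y \<noteq> g ?b" using injg yV ab ya yb by (auto simp: inj_on_def)
        then have "t \<noteq> 0" "t \<noteq> 1" using gy by auto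
        then have "0 < t" "t < 1" using t by auto
        have ga: "g ?a = L ! i" and gb: "g ?b = L ! Suc i" using gps i by auto
        have lo: "L ! i < g y" and hi: "g y < L ! Suc i"
        proof -
          have "g y - g ?a = t * (g ?b - g ?a)" "g ?b - g y = (1 - t) * (g ?b - g ?a)"
            unfolding gy by (simp_all add: algebra_simps)
          moreover have "g ?b - g ?a > 0" using Lab ga gb by simp
          moreover have "t * (g ?b - g ?a) > 0" "(1 - t) * (g ?b - g ?a) > 0"
            using \<open>g ?b - g ?a > 0\<close> \<open>0 < t\<close> \<open>t < 1\<close> by simp_all
          ultimately have "g y - g ?a > 0" "g ?b - g y > 0" by simp_all
          then show "L ! i < g y" "g y < L ! Suc i" using ga gb by simp_all
        qed
        have "g y \<in> set L" using setL yV by auto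
        then obtain k where k: "k < length L" "L ! k = g y" by (auto simp: in_set_conv_nth)
        show ?thesis
        proof (cases "k \<le> i")
          case True
          have "L ! k \<le> L ! i"
          proof (cases "k = i")
            case False
            then have "k < i" using True by simp
            then show ?thesis using sorted_wrt_nth_less[OF sL, of k i] i lenps by simp
          qed simp
          then show ?thesis using lo k by simp
        next
          case False
          then have "Suc i \<le> k" by simp
          have "L ! Suc i \<le> L ! k"
          proof (cases "k = Suc i")
            case False
            then have "Suc i < k" using \<open>Suc i \<le> k\<close> by simp
            then show ?thesis using sorted_wrt_nth_less[OF sL, of "Suc i" k] k by simp
          qed simp
          then show ?thesis using hi k by simp
        qed
      qed
    qed
  qed
  have "ps \<noteq> []" using setps ne by auto
  then have "hamiltonian_path V E ps" using dps setps edge by (auto simp: hamiltonian_path_def is_path_def)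
  then show ?thesis by blast
qed

theorem lemma1:
  fixes V :: "'a set" and E :: "'a set set"
  assumes "graph V E" and "card V \<ge> 2"
  shows "(\<exists>\<Gamma>. straight_line_drawing V \<Gamma> \<and> spanning_ratio V E \<Gamma> = 1) \<longleftrightarrow>
         (\<exists>ps. hamiltonian_path V E ps)"
proof
  assume "\<exists>\<Gamma>. straight_line_drawing V \<Gamma> \<and> spanning_ratio V E \<Gamma> = 1"
  then obtain \<Gamma> where "inj_on \<Gamma> V" "spanning_ratio V E \<Gamma> = 1"
    by (auto simp: straight_line_drawing_def)
  moreover have "finite V" using assms(1) by (simp add: graph_def)
  moreover have "V \<noteq> {}" using assms(2) by auto
  ultimately show "\<exists>ps. hamiltonian_path V E ps" using drawing_ham by blast
next
  assume "\<exists>ps. hamiltonian_path V E ps"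
  then show "\<exists>\<Gamma>. straight_line_drawing V \<Gamma> \<and> spanning_ratio V E \<Gamma> = 1"
    using ham_drawing assms(2) by blast
qed

end
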